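(* Let $(X,d_X)$ be a metric space. If $C<1$ and $D\in[0,\infty)$ are such that $\Delta_X^{(c)}(R)\leq CR+D$ for all $R\in[0,\infty)$, then $\mathrm{diam}(X)\leq\frac{D}{1-C}$.
   Context: For a cover $\mathcal{U}$ of $X$: $\mathrm{diam}(\mathcal{U})=\sup_{U\in\mathcal{U}}\mathrm{diam}(U)$; $\mathcal{L}(\mathcal{U})=\sup\{d\in[0,\infty): \text{every } E\subseteq X \text{ with } \mathrm{diam}(E)<d \text{ is contained in some } U\in\mathcal{U}\}$; point-finite means each point lies in only finitely many members. $\Delta_X^{(c)}(R)=\inf\{\mathrm{diam}(\mathcal{U}): \mathcal{U} \text{ point-finite cover of } X,\ \mathcal{L}(\mathcal{U})\geq R\}$. *)

theory Defs
  imports "HOL-Analysis.Analysis"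
begin

definition ediam :: "'a::metric_space set \<Rightarrow> ereal" where
  "ediam E = Sup (insert 0 {ereal (dist x y) | x y. x \<in> E \<and> y \<in> E})"

definition is_cover :: "'a set \<Rightarrow> 'a set set \<Rightarrow> bool" where
  "is_cover X \<U> \<longleftrightarrow> (\<forall>U\<in>\<U>. U \<subseteq> X) \<and> \<Union>\<U> = X"

definition point_finite :: "'a set set \<Rightarrow> bool" where
  "point_finite \<U> \<longleftrightarrow> (\<forall>x. finite {U\<in>\<U>. x \<in> U})"

definition cover_diam :: "'a::metric_space set set \<Rightarrow> ereal" where
  "cover_diam \<U> = (SUP U\<in>\<U>. ediam U)"

definition lebesgue_num :: "'a::metric_space set \<Rightarrow> 'a set set \<Rightarrow> ereal" where
  "lebesgue_num X \<U> = Sup {ereal d | d. d \<ge> 0 \<and>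
      (\<forall>E. E \<subseteq> X \<longrightarrow> ediam E < ereal d \<longrightarrow> (\<exists>U\<in>\<U>. E \<subseteq> U))}"

text \<open>The function Delta^(c)_X(R); the infimum of the empty set is +infinity.\<close>
definition Delta_c :: "'a::metric_space set \<Rightarrow> real \<Rightarrow> ereal" where
  "Delta_c X R = Inf {cover_diam \<U> | \<U>. is_cover X \<U> \<and> point_finite \<U>
                                      \<and> lebesgue_num X \<U> \<ge> ereal R}"

end

theory Submission
  imports Defs
begin

lemma ediam_pair: "ediam {x, y} = ereal (dist x y)"
proof -
  have "{ereal (dist a b) | a b. a \<in> {x,y} \<and> b \<in> {x,y}} = {0, ereal (dist x y)}"
    by (auto simp: dist_commute)
  hence "ediam {x,y} = Sup {0, ereal (dist x y)}" unfolding ediam_def by simp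
  also have "\<dots> = ereal (dist x y)"
    by (rule antisym) (auto intro: Sup_least Sup_upper)
  finally show ?thesis .
qed

lemma ediam_ge: "x \<in> U \<Longrightarrow> y \<in> U \<Longrightarrow> ereal (dist x y) \<le> ediam U"
  unfolding ediam_def by (rule Sup_upper) blast

lemma pair_bound:
  fixes X :: "'a::metric_space set" and C D :: real
  assumes C: "C < 1" and D: "D \<ge> 0"
    and H: "\<forall>R\<ge>0. Delta_c X R \<le> ereal (C * R + D)"
    and x: "x \<in> X" and y: "y \<in> X"
  shows "dist x y \<le> D / (1 - C)"
proof (rule ccontr)
  define t where "t = dist x y"
  assume "\<not> dist x y \<le> D / (1 - C)"
  hence "t > D / (1 - C)" by (simp add: t_def)
  hence gap: "t - C*t - D > 0" using C by (simp add: field_simps)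
  define \<eta> where "\<eta> = (t - C*t - D) / (2*(\<bar>C\<bar>+1))"
  have \<eta>pos: "\<eta> > 0" using gap by (simp add: \<eta>_def)
  have "\<bar>C\<bar> * \<eta> < (t - C*t - D)/2" using gap
    by (simp add: \<eta>_def field_simps)
  moreover have "C*\<eta> \<le> \<bar>C\<bar> * \<eta>" using \<eta>pos
    by (metis abs_ge_self mult_right_mono less_imp_le)
  ultimately have "C*\<eta> < (t - C*t - D)/2" by linarith
  define R where "R = t + \<eta>"
  have Rt: "R > t" using \<eta>pos by (simp add: R_def)
  have t0: "t \<ge> 0" by (simp add: t_def)
  have lt: "C*R + D < t" using \<open>C*\<eta> < _\<close> gap by (simp add: R_def algebra_simps)
  define \<epsilon> where "\<epsilon> = (t - (C*R + D))/2"
  have "Delta_c X R \<le> ereal (C*R+D)" using H Rt t0 by simp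
  also have "\<dots> < ereal (C*R+D+\<epsilon>)" using lt by (simp add: \<epsilon>_def)
  finally have "Delta_c X R < ereal (C*R+D+\<epsilon>)" .
  then obtain \<U> where U: "is_cover X \<U>" "point_finite \<U>" "lebesgue_num X \<U> \<ge> ereal R"
      "cover_diam \<U> < ereal (C*R+D+\<epsilon>)"
    unfolding Delta_c_def by (auto simp: Inf_less_iff)
  have "ereal t < lebesgue_num X \<U>" proof -
    have "ereal t < ereal R" using Rt by simp
    thus ?thesis using U(3) by (rule less_le_trans)
  qed
  then obtain d where d: "d \<ge> 0" "\<forall>E. E \<subseteq> X \<longrightarrow> ediam E < ereal d \<longrightarrow> (\<exists>U\<in>\<U>. E \<subseteq> U)"
      "ereal t < ereal d"
    unfolding lebesgue_num_def by (auto simp: less_Sup_iff)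
  then obtain U where "U \<in> \<U>" "{x,y} \<subseteq> U"
  proof -
    have "{x,y} \<subseteq> X" "ediam {x,y} < ereal d" using x y d(3) by (auto simp: ediam_pair t_def)
    thus ?thesis using d(2) that by blast
  qed
  hence "ereal t \<le> ediam U" unfolding t_def by (intro ediam_ge) auto
  also have "\<dots> \<le> cover_diam \<U>" unfolding cover_diam_def using \<open>U \<in> \<U>\<close> by (rule SUP_upper)
  also have "\<dots> < ereal (C*R+D+\<epsilon>)" by (rule U(4))
  finally have "t < C*R+D+\<epsilon>" by simp
  thus False using lt unfolding \<epsilon>_def by (simp add: field_simps)
qed

theorem lemma3p5:
  fixes X :: "'a::metric_space set" and C D :: real
  assumes "C < 1" and "D \<ge> 0"
    and "\<forall>R\<ge>0. Delta_c X R \<le> ereal (C * R + D)"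
  shows "ediam X \<le> ereal (D / (1 - C))"
  unfolding ediam_def
proof (rule Sup_least)
  fix z assume "z \<in> insert 0 {ereal (dist x y) | x y. x \<in> X \<and> y \<in> X}"
  then show "z \<le> ereal (D / (1 - C))"
    using pair_bound[OF assms] assms(1,2) by auto
qed

end
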